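(* For every $q\in(0,\infty)$ and $r\in(0,\infty]$ there exists a constant $C=C(q,r)$ such that the following holds. Let $X$ be a finite set, $\nu$ an outer measure on $X$, $\omega$ a measure on $X$, and $\mathcal A$ a collection of pairwise disjoint subsets of $X$; set $B=\bigcup_{A\in\mathcal A}A$. Then for every function $f$ on $X$: if $q\ge r$, $\sum_{A\in\mathcal A}\|f1_A\|^q_{L^q_\nu(\ell^r_\omega)}\le C\|f1_B\|^q_{L^q_\nu(\ell^r_\omega)}$; if $q\le r$, $\|f1_B\|^q_{L^q_\nu(\ell^r_\omega)}\le C\sum_{A\in\mathcal A}\|f1_A\|^q_{L^q_\nu(\ell^r_\omega)}$.
   Context: An outer measure on $X$ is a monotone, subadditive function $\mathcal P(X)\to[0,\infty]$ vanishing on $\varnothing$; standing assumption: outer measures are finite and strictly positive on nonempty subsets; the measure $\omega$ is given by a finite strictly positive weight, $\omega(A)=\sum_{x\in A}\omega(x)$. Convention $\infty^{-1}=0$. For $r\in(0,\infty]$ and nonempty $A\subseteq X$: $\ell^r_\omega(f)(A)=\nu(A)^{-1/r}\|f1_A\|_{L^r(X,\omega)}$; $\|f\|_{L^\infty_\nu(\ell^r_\omega)}=\sup_{\varnothing\ne A\subseteq X}\ell^r_\omega(f)(A)$; for $\lambda>0$, $\nu(\ell^r_\omega(f)>\lambda)=\inf\{\nu(B'):B'\subseteq X,\ \|f1_{X\setminus B'}\|_{L^\infty_\nu(\ell^r_\omega)}\le\lambda\}$; for $q\in(0,\infty)$, $\|f\|_{L^q_\nu(\ell^r_\omega)}=\big(\int_0^\infty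 q\lambda^{q-1}\nu(\ell^r_\omega(f)>\lambda)\,d\lambda\big)^{1/q}$. *)

theory Defs
  imports "HOL-Analysis.Analysis"
begin

definition outer_measure :: "'a set \<Rightarrow> ('a set \<Rightarrow> real) \<Rightarrow> bool" where
  "outer_measure X \<nu> \<longleftrightarrow>
     \<nu> {} = 0 \<and>
     (\<forall>A B. A \<subseteq> B \<and> B \<subseteq> X \<longrightarrow> \<nu> A \<le> \<nu> B) \<and>
     (\<forall>A B. A \<subseteq> X \<and> B \<subseteq> X \<longrightarrow> \<nu> (A \<union> B) \<le> \<nu> A + \<nu> B) \<and>
     (\<forall>A. A \<subseteq> X \<and> A \<noteq> {} \<longrightarrow> \<nu> A > 0)"

text \<open>The measure omega is given by a finite strictly positive weight w on X.\<close>
definition pos_weight :: "'a set \<Rightarrow> ('a \<Rightarrow> real) \<Rightarrow> bool" where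
  "pos_weight X w \<longleftrightarrow> (\<forall>x\<in>X. w x > 0)"

definition restr :: "'a set \<Rightarrow> ('a \<Rightarrow> 'b::real_normed_vector) \<Rightarrow> 'a \<Rightarrow> 'b" where
  "restr A f = (\<lambda>x. if x \<in> A then f x else 0)"

text \<open>L^r(X, omega) norm of f (r in (0, infinity]); for r = infinity the essential supremum,
  which is the maximum since omega is strictly positive.\<close>
definition Lr_norm :: "'a set \<Rightarrow> ('a \<Rightarrow> real) \<Rightarrow> ereal \<Rightarrow> ('a \<Rightarrow> 'b::real_normed_vector) \<Rightarrow> real" where
  "Lr_norm X w r f =
     (if r = \<infinity> then Max ((\<lambda>x. norm (f x)) ` X \<union> {0})
      else (\<Sum>x\<in>X. w x * norm (f x) powr real_of_ereal r) powr (1 / real_of_ereal r))"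

definition inv_exp :: "ereal \<Rightarrow> real" where
  "inv_exp r = (if r = \<infinity> then 0 else 1 / real_of_ereal r)"

definition ell_size :: "'a set \<Rightarrow> ('a set \<Rightarrow> real) \<Rightarrow> ('a \<Rightarrow> real) \<Rightarrow> ereal
    \<Rightarrow> ('a \<Rightarrow> 'b::real_normed_vector) \<Rightarrow> 'a set \<Rightarrow> real" where
  "ell_size X \<nu> w r f A = \<nu> A powr (- inv_exp r) * Lr_norm X w r (restr A f)"

definition Linf_ell :: "'a set \<Rightarrow> ('a set \<Rightarrow> real) \<Rightarrow> ('a \<Rightarrow> real) \<Rightarrow> ereal
    \<Rightarrow> ('a \<Rightarrow> 'b::real_normed_vector) \<Rightarrow> real" where
  "Linf_ell X \<nu> w r f = Max ({ell_size X \<nu> w r f A | A. A \<subseteq> X \<and> A \<noteq> {}} \<union> {0})"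

definition super_level :: "'a set \<Rightarrow> ('a set \<Rightarrow> real) \<Rightarrow> ('a \<Rightarrow> real) \<Rightarrow> ereal
    \<Rightarrow> ('a \<Rightarrow> 'b::real_normed_vector) \<Rightarrow> real \<Rightarrow> real" where
  "super_level X \<nu> w r f lam =
     Inf {\<nu> B' | B'. B' \<subseteq> X \<and> Linf_ell X \<nu> w r (restr (X - B') f) \<le> lam}"

definition Lq_ell :: "'a set \<Rightarrow> ('a set \<Rightarrow> real) \<Rightarrow> ('a \<Rightarrow> real) \<Rightarrow> real \<Rightarrow> ereal
    \<Rightarrow> ('a \<Rightarrow> 'b::real_normed_vector) \<Rightarrow> real" where
  "Lq_ell X \<nu> w q r f =
     (LINT lam:{0<..}|lborel. q * lam powr (q - 1) * super_level X \<nu> w r f lam) powr (1 / q)"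

end

theory Submission
  imports Defs
begin


locale om_setting =
  fixes X :: "'a set" and nu :: "'a set \<Rightarrow> real"
  assumes finX: "finite X" and om: "outer_measure X nu"
begin

lemma nu_empty: "nu {} = 0" using om by (simp add: outer_measure_def)
lemma nu_mono: "A \<subseteq> B \<Longrightarrow> B \<subseteq> X \<Longrightarrow> nu A \<le> nu B" using om by (simp add: outer_measure_def)
lemma nu_sub: "A \<subseteq> X \<Longrightarrow> B \<subseteq> X \<Longrightarrow> nu (A \<union> B) \<le> nu A + nu B" using om by (simp add: outer_measure_def)
lemma nu_pos: "A \<subseteq> X \<Longrightarrow> A \<noteq> {} \<Longrightarrow> nu A > 0" using om by (simp add: outer_measure_def)
lemma nu_nonneg: "A \<subseteq> X \<Longrightarrow> nu A \<ge> 0" using nu_mono[of "{}" A] nu_empty by simp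

lemma nu_UN_le:
  assumes "finite I" "\<And>i. i \<in> I \<Longrightarrow> F i \<subseteq> X"
  shows "nu (\<Union>i\<in>I. F i) \<le> (\<Sum>i\<in>I. nu (F i))"
  using assms
proof (induction I rule: finite_induct)
  case empty then show ?case by (simp add: nu_empty)
next
  case (insert i I)
  have "nu (\<Union>j\<in>insert i I. F j) = nu (F i \<union> (\<Union>j\<in>I. F j))" by simp
  also have "\<dots> \<le> nu (F i) + nu (\<Union>j\<in>I. F j)"
    by (rule nu_sub) (use insert in auto)
  also have "\<dots> \<le> nu (F i) + (\<Sum>j\<in>I. nu (F j))" using insert by auto
  finally show ?case using insert by simp
qed

definition M :: "('a \<Rightarrow> real) \<Rightarrow> 'a set \<Rightarrow> real" where
  "M u S = sum u (X \<inter> S)"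

definition adm :: "('a \<Rightarrow> real) \<Rightarrow> 'a set \<Rightarrow> real \<Rightarrow> bool" where
  "adm u B t \<longleftrightarrow> B \<subseteq> X \<and> (\<forall>E. E \<subseteq> X \<longrightarrow> M u (E - B) \<le> t * nu E)"

definition mu :: "('a \<Rightarrow> real) \<Rightarrow> real \<Rightarrow> real" where
  "mu u t = Inf {nu B | B. adm u B t}"

definition Psi :: "('a \<Rightarrow> real) \<Rightarrow> real \<Rightarrow> real" where
  "Psi u t = Max ((\<lambda>S. M u S - t * nu S) ` Pow X)"

lemma M_empty[simp]: "M u {} = 0" by (simp add: M_def)

lemma M_nonneg: "\<forall>x\<in>X. u x \<ge> 0 \<Longrightarrow> M u S \<ge> 0"
  unfolding M_def by (rule sum_nonneg) auto

lemma M_union_disj: "S \<inter> T = {} \<Longrightarrow> M u (S \<union> T) = M u S + M u T"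
  unfolding M_def using finX
  by (metis Int_Un_distrib finite_Int inf_bot_right inf_left_commute inf_sup_aci(1) sum.union_disjoint)

lemma M_mono: "\<forall>x\<in>X. u x \<ge> 0 \<Longrightarrow> S \<subseteq> T \<Longrightarrow> M u S \<le> M u T"
  unfolding M_def using finX by (intro sum_mono2) auto

lemma Psi_ge: "S \<subseteq> X \<Longrightarrow> M u S - t * nu S \<le> Psi u t"
  unfolding Psi_def using finX by (intro Max_ge) auto

lemma Psi_ex: "\<exists>S\<subseteq>X. Psi u t = M u S - t * nu S"
proof -
  have "Psi u t \<in> (\<lambda>S. M u S - t * nu S) ` Pow X"
    unfolding Psi_def using finX by (intro Max_in) auto
  then show ?thesis by auto
qed

lemma Psi_nonneg: "Psi u t \<ge> 0"
  using Psi_ge[of "{}" u t] by (simp add: nu_empty)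

lemma Psi_antimono:
  assumes "t \<le> t'" shows "Psi u t' \<le> Psi u t"
proof -
  obtain S where S: "S \<subseteq> X" "Psi u t' = M u S - t' * nu S" using Psi_ex by blast
  have "t * nu S \<le> t' * nu S" using assms nu_nonneg[OF S(1)] by (simp add: mult_right_mono)
  then have "Psi u t' \<le> M u S - t * nu S" using S by simp
  also have "\<dots> \<le> Psi u t" by (rule Psi_ge[OF S(1)])
  finally show ?thesis .
qed

lemma Psi_0: assumes "\<forall>x\<in>X. u x \<ge> 0" shows "Psi u 0 = M u X"
proof -
  obtain S where S: "S \<subseteq> X" "Psi u 0 = M u S - 0 * nu S" using Psi_ex by blast
  have "M u S \<le> M u X" using M_mono[OF assms S(1)] .
  moreover have "M u X - 0 * nu X \<le> Psi u 0" by (rule Psi_ge) simp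
  ultimately show ?thesis using S by simp
qed

lemma Psi_lip:
  assumes "t \<le> t'" shows "Psi u t - Psi u t' \<le> (t' - t) * nu X"
proof -
  obtain S where S: "S \<subseteq> X" "Psi u t = M u S - t * nu S" using Psi_ex by blast
  have "M u S - t' * nu S \<le> Psi u t'" by (rule Psi_ge[OF S(1)])
  moreover have "(t' - t) * nu S \<le> (t' - t) * nu X"
    using assms nu_mono[OF S(1)] by (intro mult_left_mono) auto
  ultimately show ?thesis using S by (simp add: algebra_simps)
qed

lemma Psi_large:
  assumes u: "\<forall>x\<in>X. u x \<ge> 0"
  shows "\<exists>L>0. \<forall>t\<ge>L. Psi u t = 0"
proof -
  define L where "L = 1 + Max (insert 0 ((\<lambda>S. M u S / nu S) ` (Pow X - {{}})))"
  have fin: "finite ((\<lambda>S. M u S / nu S) ` (Pow X - {{}}))" using finX by simp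
  have nn: "\<And>S. S \<in> Pow X - {{}} \<Longrightarrow> M u S / nu S \<ge> 0"
    using M_nonneg[OF u] nu_nonneg by auto
  have Lpos: "L > 0"
  proof -
    have "0 \<le> Max (insert 0 ((\<lambda>S. M u S / nu S) ` (Pow X - {{}})))"
      using fin by (intro Max_ge) auto
    then show ?thesis by (simp add: L_def)
  qed
  have "Psi u t = 0" if t: "t \<ge> L" for t
  proof -
    obtain S where S: "S \<subseteq> X" "Psi u t = M u S - t * nu S" using Psi_ex by blast
    have "M u S - t * nu S \<le> 0"
    proof (cases "S = {}")
      case True then show ?thesis by (simp add: nu_empty)
    next
      case False
      have np: "nu S > 0" using nu_pos[OF S(1) False] .
      have "M u S / nu S \<le> Max (insert 0 ((\<lambda>S. M u S / nu S) ` (Pow X - {{}})))"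
        using fin S False by (intro Max_ge) auto
      then have "M u S / nu S \<le> t" using t by (simp add: L_def)
      then have "M u S \<le> t * nu S" using np by (simp add: divide_le_eq)
      then show ?thesis by simp
    qed
    then show ?thesis using Psi_nonneg[of u t] S by simp
  qed
  then show ?thesis using Lpos by blast
qed

lemma adm_X: "t \<ge> 0 \<Longrightarrow> adm u X t"
  unfolding adm_def using nu_nonneg by (auto simp: M_def)

lemma mu_bounds:
  assumes "t \<ge> 0" shows "0 \<le> mu u t" "mu u t \<le> nu X"
proof -
  have ne: "{nu B | B. adm u B t} \<noteq> {}" using adm_X[OF assms] by blast
  have bdd: "bdd_below {nu B | B. adm u B t}"
    by (rule bdd_belowI[of _ 0]) (auto simp: adm_def intro: nu_nonneg)
  show "0 \<le> mu u t" unfolding mu_def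
    by (rule cInf_greatest[OF ne]) (auto simp: adm_def intro: nu_nonneg)
  show "mu u t \<le> nu X" unfolding mu_def
    by (rule cInf_lower[OF _ bdd]) (use adm_X[OF assms] in blast)
qed

lemma mu_antimono:
  assumes "0 \<le> t" "t \<le> t'" shows "mu u t' \<le> mu u t"
proof -
  have ne: "{nu B | B. adm u B t} \<noteq> {}" using adm_X[OF assms(1)] by blast
  have bdd: "bdd_below {nu B | B. adm u B t'}"
    by (rule bdd_belowI[of _ 0]) (auto simp: adm_def intro: nu_nonneg)
  have sub: "{nu B | B. adm u B t} \<subseteq> {nu B | B. adm u B t'}"
  proof
    fix y assume "y \<in> {nu B | B. adm u B t}"
    then obtain B where B: "y = nu B" "adm u B t" by blast
    have "adm u B t'" using B(2) assms unfolding adm_def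
      by (smt (verit, best) mult_right_mono nu_nonneg)
    then show "y \<in> {nu B | B. adm u B t'}" using B by blast
  qed
  show ?thesis unfolding mu_def by (rule cInf_superset_mono[OF ne bdd sub])
qed

lemma mu_upper:
  assumes t: "t > 0"
  shows "mu u t \<le> 2 * (Psi u (t/2) - Psi u t) / t"
proof -
  obtain S where S: "S \<subseteq> X" "Psi u t = M u S - t * nu S" using Psi_ex by blast
  have "adm u S t" unfolding adm_def
  proof (intro conjI allI impI)
    show "S \<subseteq> X" by fact
    fix E assume E: "E \<subseteq> X"
    have "M u (S \<union> E) - t * nu (S \<union> E) \<le> Psi u t" using S E by (intro Psi_ge) auto
    moreover have "M u (S \<union> E) = M u S + M u (E - S)"
      by (metis M_union_disj Diff_disjoint Un_Diff_cancel)
    moreover have "nu (S \<union> E) \<le> nu S + nu E" using S E by (intro nu_sub) auto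
    moreover have "t * nu (S \<union> E) \<le> t * (nu S + nu E)"
      using \<open>nu (S \<union> E) \<le> nu S + nu E\<close> t by (intro mult_left_mono) auto
    ultimately show "M u (E - S) \<le> t * nu E" using S
      by (simp add: algebra_simps)
  qed
  then have "mu u t \<le> nu S" unfolding mu_def
    by (intro cInf_lower) (auto intro!: bdd_belowI[of _ 0] simp: adm_def intro: nu_nonneg)
  moreover have "M u S - (t/2) * nu S \<le> Psi u (t/2)" by (rule Psi_ge[OF S(1)])
  ultimately have "mu u t * t \<le> nu S * t" "(t/2) * nu S \<le> Psi u (t/2) - Psi u t"
    using S t by (auto simp: algebra_simps)
  then have "mu u t * t \<le> 2 * (Psi u (t/2) - Psi u t)" by (simp add: algebra_simps)
  then show ?thesis using t by (simp add: le_divide_eq)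
qed

lemma mu_lower:
  assumes t: "t > 0"
  shows "(Psi u (2*t) - Psi u (4*t)) / (4*t) \<le> mu u t"
proof -
  obtain S where S: "S \<subseteq> X" "Psi u (2*t) = M u S - (2*t) * nu S" using Psi_ex by blast
  have key: "Psi u (2*t) - Psi u (4*t) \<le> 4*t * nu B" if B: "adm u B t" for B
  proof -
    have BX: "B \<subseteq> X" using B by (simp add: adm_def)
    have "M u (S \<inter> B) - (2*t) * nu (S \<inter> B) \<le> Psi u (2*t)" using S by (intro Psi_ge) auto
    moreover have "M u S = M u (S \<inter> B) + M u (S - B)"
      by (metis M_union_disj Diff_disjoint Int_Diff_Un Int_Diff_disjoint)
    moreover have "M u (S - B) \<le> t * nu S" using B S by (simp add: adm_def)
    ultimately have "2*t * (nu S - nu (S \<inter> B)) \<le> t * nu S" using S by (simp add: algebra_simps)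
    then have "t * (2 * (nu S - nu (S \<inter> B))) \<le> t * nu S" by (simp add: algebra_simps)
    then have "2 * (nu S - nu (S \<inter> B)) \<le> nu S" using t by (simp add: mult_le_cancel_left_pos)
    then have "nu S \<le> 2 * nu (S \<inter> B)" by simp
    also have "\<dots> \<le> 2 * nu B" using BX by (simp add: nu_mono)
    finally have 1: "nu S \<le> 2 * nu B" .
    have "M u S - (4*t) * nu S \<le> Psi u (4*t)" by (rule Psi_ge[OF S(1)])
    then have "Psi u (2*t) - Psi u (4*t) \<le> 2*t * nu S" using S by (simp add: algebra_simps)
    also have "\<dots> \<le> 2*t*(2*nu B)" using 1 t by (intro mult_left_mono) auto
    finally show ?thesis by simp
  qed
  have ne: "{nu B | B. adm u B t} \<noteq> {}" using adm_X[of t u] t by auto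
  show ?thesis unfolding mu_def
  proof (rule cInf_greatest[OF ne])
    fix y assume "y \<in> {nu B | B. adm u B t}"
    then obtain B where "y = nu B" "adm u B t" by blast
    then show "(Psi u (2*t) - Psi u (4*t)) / (4*t) \<le> y" using key t
      by (simp add: divide_le_eq mult.commute)
  qed
qed

end

context om_setting begin

definition ur :: "('a \<Rightarrow> real) \<Rightarrow> 'a set \<Rightarrow> 'a \<Rightarrow> real" where
  "ur u A x = (if x \<in> A then u x else 0)"

lemma M_ur: "M (ur u A) S = sum u (X \<inter> S \<inter> A)"
  unfolding M_def ur_def using finX
  by (simp add: sum.inter_restrict[symmetric] Int_assoc)

lemma ur_nonneg: "\<forall>x\<in>X. u x \<ge> 0 \<Longrightarrow> \<forall>x\<in>X. ur u A x \<ge> 0"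
  by (simp add: ur_def)

lemma fam_M:
  assumes AX: "\<A> \<subseteq> Pow X" and dj: "disjoint \<A>"
  shows "(\<Sum>A\<in>\<A>. M (ur u A) X) = M (ur u (\<Union>\<A>)) X"
proof -
  have finA: "finite \<A>" using AX finX by (meson finite_Pow_iff finite_subset)
  have "(\<Sum>A\<in>\<A>. M (ur u A) X) = (\<Sum>A\<in>\<A>. sum u A)"
    using AX by (intro sum.cong) (auto simp: M_ur Int_absorb1)
  also have "\<dots> = sum u (\<Union>\<A>)"
    using AX dj finX by (subst sum.Union_disjoint) (auto simp: disjoint_def intro: finite_subset)
  also have "\<dots> = M (ur u (\<Union>\<A>)) X" using AX by (auto simp: M_ur intro!: arg_cong[where f="sum u"])
  finally show ?thesis .
qed

lemma fam_Psi:
  assumes AX: "\<A> \<subseteq> Pow X" and dj: "disjoint \<A>" and t: "t \<ge> 0"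
  shows "(\<Sum>A\<in>\<A>. Psi (ur u A) t) \<le> Psi (ur u (\<Union>\<A>)) t"
proof -
  have finA: "finite \<A>" using AX finX by (meson finite_Pow_iff finite_subset)
  have "\<forall>A. \<exists>S. S \<subseteq> X \<and> Psi (ur u A) t = M (ur u A) S - t * nu S" using Psi_ex by blast
  then obtain S where S: "\<And>A. S A \<subseteq> X" "\<And>A. Psi (ur u A) t = M (ur u A) (S A) - t * nu (S A)"
    by metis
  define S' where "S' = (\<Union>A\<in>\<A>. S A \<inter> A)"
  have S'X: "S' \<subseteq> X" using S by (auto simp: S'_def)
  have "(\<Sum>A\<in>\<A>. Psi (ur u A) t) = (\<Sum>A\<in>\<A>. sum u (S A \<inter> A) - t * nu (S A))"
    using S by (intro sum.cong) (auto simp: M_ur Int_absorb1 Int_assoc[symmetric])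
  also have "\<dots> \<le> (\<Sum>A\<in>\<A>. sum u (S A \<inter> A) - t * nu (S A \<inter> A))"
    using S t by (intro sum_mono) (auto intro!: mult_left_mono nu_mono)
  also have "\<dots> = (\<Sum>A\<in>\<A>. sum u (S A \<inter> A)) - t * (\<Sum>A\<in>\<A>. nu (S A \<inter> A))"
    by (simp add: sum_subtractf sum_distrib_left)
  also have "(\<Sum>A\<in>\<A>. sum u (S A \<inter> A)) = sum u S'"
  proof -
    have djS: "\<forall>i\<in>\<A>. \<forall>j\<in>\<A>. i \<noteq> j \<longrightarrow> (S i \<inter> i) \<inter> (S j \<inter> j) = {}"
      using dj unfolding disjoint_def by blast
    show ?thesis unfolding S'_def using finA finX S djS
      by (subst sum.UNION_disjoint) (auto intro: finite_subset)
  qed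
  finally have 1: "(\<Sum>A\<in>\<A>. Psi (ur u A) t) \<le> sum u S' - t * (\<Sum>A\<in>\<A>. nu (S A \<inter> A))" .
  have 2: "t * nu S' \<le> t * (\<Sum>A\<in>\<A>. nu (S A \<inter> A))"
    unfolding S'_def using t finA S by (intro mult_left_mono nu_UN_le) auto
  have 3: "sum u S' = M (ur u (\<Union>\<A>)) S'"
    using S'X by (auto simp: M_ur S'_def intro!: arg_cong[where f="sum u"])
  have "(\<Sum>A\<in>\<A>. Psi (ur u A) t) \<le> M (ur u (\<Union>\<A>)) S' - t * nu S'" using 1 2 3 by linarith
  also have "\<dots> \<le> Psi (ur u (\<Union>\<A>)) t" by (rule Psi_ge[OF S'X])
  finally show ?thesis .
qed

end


lemma scale_nn:
  fixes f :: "real \<Rightarrow> real" and a s :: real and S :: "real set"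
  assumes a: "a > 0" and f[measurable]: "f \<in> borel_measurable borel"
    and S: "S \<subseteq> {0<..}" and Sb[measurable]: "S \<in> sets borel"
  shows "(\<integral>\<^sup>+x. indicator S x * ennreal (x powr s * f x) \<partial>lborel)
       = ennreal (a powr (s+1)) * (\<integral>\<^sup>+x. indicator S (a*x) * ennreal (x powr s * f (a*x)) \<partial>lborel)"
proof -
  have m: "(\<lambda>x. indicator S x * ennreal (x powr s * f x)) \<in> borel_measurable borel" by measurable
  have "(\<integral>\<^sup>+x. indicator S x * ennreal (x powr s * f x) \<partial>lborel)
     = ennreal \<bar>a\<bar> * (\<integral>\<^sup>+x. indicator S (0 + a*x) * ennreal ((0 + a*x) powr s * f (0 + a*x)) \<partial>lborel)"
    using nn_integral_real_affine[OF m, of a 0] a by simp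
  also have "(\<lambda>x. indicator S (0 + a*x) * ennreal ((0 + a*x) powr s * f (0 + a*x)))
      = (\<lambda>x. ennreal (a powr s) * (indicator S (a*x) * ennreal (x powr s * f (a*x))))"
  proof
    fix x
    show "indicator S (0 + a*x) * ennreal ((0 + a*x) powr s * f (0 + a*x))
      = ennreal (a powr s) * (indicator S (a*x) * ennreal (x powr s * f (a*x)))"
    proof (cases "a*x \<in> S")
      case True
      then have "a*x > 0" using S by auto
      then have x: "x > 0" using a by (simp add: zero_less_mult_iff)
      have "(a*x) powr s = a powr s * x powr s" using a x by (simp add: powr_mult)
      then show ?thesis using True a
        by (simp add: ennreal_mult' mult.assoc)
    qed simp
  qed
  also have "(\<integral>\<^sup>+x. ennreal (a powr s) * (indicator S (a*x) * ennreal (x powr s * f (a*x))) \<partial>lborel)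
      = ennreal (a powr s) * (\<integral>\<^sup>+x. indicator S (a*x) * ennreal (x powr s * f (a*x)) \<partial>lborel)"
    by (rule nn_integral_cmult) measurable
  also have "ennreal \<bar>a\<bar> * (ennreal (a powr s) * (\<integral>\<^sup>+x. indicator S (a*x) * ennreal (x powr s * f (a*x)) \<partial>lborel))
     = ennreal (a powr (s+1)) * (\<integral>\<^sup>+x. indicator S (a*x) * ennreal (x powr s * f (a*x)) \<partial>lborel)"
    using a by (simp add: mult.assoc[symmetric] ennreal_mult[symmetric] powr_add mult.commute)
  finally show ?thesis .
qed

locale qr_setting = om_setting +
  fixes q rho :: real
  assumes q: "q > 0" and rho: "rho > 0"
begin

definition "s = q - rho - 1"
definition "gam = 2 powr (1/rho)"
definition "G u x = Psi u (x powr rho)"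
definition "D u x = G u x - G u (gam * x)"
definition "H u x = M u X - G u x"
definition "Nq u = (\<integral>\<^sup>+x. indicator {0<..} x * ennreal (q * x powr (q-1) * mu u (x powr rho)) \<partial>lborel)"
definition "K u = (\<integral>\<^sup>+x. indicator {0<..} x * ennreal (x powr s * D u x) \<partial>lborel)"

lemma gam_gt1: "gam > 1"
  unfolding gam_def using rho by simp

lemma gam_pow: "gam powr rho = 2"
  unfolding gam_def using rho by (simp add: powr_powr)

lemma pow_div_gam: "x \<ge> 0 \<Longrightarrow> (x / gam) powr rho = x powr rho / 2"
  using gam_gt1 by (simp add: powr_divide gam_pow)

lemma pow_mul_gam: "x \<ge> 0 \<Longrightarrow> (gam * x) powr rho = 2 * x powr rho"
  using gam_gt1 by (simp add: powr_mult gam_pow)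

lemma Psi_meas[measurable]: "Psi u \<in> borel_measurable borel"
proof -
  have "mono (\<lambda>t. - Psi u t)" by (rule monoI) (simp add: Psi_antimono)
  then have "(\<lambda>t. - Psi u t) \<in> borel_measurable borel" by (rule borel_measurable_mono)
  then have "(\<lambda>t. - (- Psi u t)) \<in> borel_measurable borel" by measurable
  then show ?thesis by simp
qed

lemma G_meas[measurable]: "G u \<in> borel_measurable borel"
proof -
  have "(\<lambda>x. Psi u (x powr rho)) \<in> borel_measurable borel" by measurable
  then show ?thesis by (simp add: G_def[abs_def])
qed

lemma D_meas[measurable]: "D u \<in> borel_measurable borel"
  unfolding D_def[abs_def] by measurable

lemma H_meas[measurable]: "H u \<in> borel_measurable borel"
  unfolding H_def[abs_def] by measurable

context
  fixes u :: "'a \<Rightarrow> real" assumes u: "\<forall>x\<in>X. u x \<ge> 0"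
begin

lemma G_nonneg: "G u x \<ge> 0" by (simp add: G_def Psi_nonneg)

lemma G_le: "x \<ge> 0 \<Longrightarrow> G u x \<le> M u X"
  unfolding G_def using Psi_antimono[of 0 "x powr rho" u] Psi_0[OF u] by simp

lemma H_nonneg: "x \<ge> 0 \<Longrightarrow> H u x \<ge> 0" using G_le by (simp add: H_def)

lemma D_nonneg: "x \<ge> 0 \<Longrightarrow> D u x \<ge> 0"
proof -
  assume x: "x \<ge> 0"
  have "x \<le> gam * x" using mult_right_mono[of 1 gam x] gam_gt1 x by simp
  then show ?thesis unfolding D_def G_def using gam_gt1 rho x
    by (intro diff_ge_0_iff_ge[THEN iffD2] Psi_antimono powr_mono2) auto
qed

lemma H_small: "x \<ge> 0 \<Longrightarrow> H u x \<le> nu X * x powr rho"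
  unfolding H_def G_def using Psi_lip[of 0 "x powr rho" u] Psi_0[OF u] by (simp add: mult.commute)

lemma H_D: "H u (gam * x) - H u x = D u x" by (simp add: H_def D_def)

lemma pt_upper:
  assumes x: "x > 0"
  shows "q * x powr (q-1) * mu u (x powr rho) \<le> 2 * q * (x powr s * D u (x / gam))"
proof -
  have t: "x powr rho > 0" using x by simp
  have "mu u (x powr rho) \<le> 2 * (Psi u (x powr rho / 2) - Psi u (x powr rho)) / x powr rho"
    by (rule mu_upper[OF t])
  also have "Psi u (x powr rho / 2) - Psi u (x powr rho) = D u (x / gam)"
    using x gam_gt1 by (simp add: D_def G_def pow_div_gam)
  finally have "q * x powr (q-1) * mu u (x powr rho) \<le> q * x powr (q-1) * (2 * D u (x / gam) / x powr rho)"
    using q x by (intro mult_left_mono) auto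
  also have "\<dots> = 2 * q * ((x powr (q-1) / x powr rho) * D u (x / gam))" by simp
  also have "x powr (q-1) / x powr rho = x powr s"
    proof -
      have "x powr (q-1) / x powr rho = x powr (q - 1 - rho)" by (simp add: powr_diff)
      moreover have "q - 1 - rho = s" by (simp add: s_def)
      ultimately show ?thesis by simp
    qed
  finally show ?thesis .
qed

lemma pt_lower:
  assumes x: "x > 0"
  shows "q / 4 * (x powr s * D u (gam * x)) \<le> q * x powr (q-1) * mu u (x powr rho)"
proof -
  have t: "x powr rho > 0" using x by simp
  have "Psi u (2 * x powr rho) - Psi u (4 * x powr rho) = D u (gam * x)"
    using x gam_gt1 by (simp add: D_def G_def pow_mul_gam)
  then have "D u (gam * x) / (4 * x powr rho) \<le> mu u (x powr rho)"
    using mu_lower[OF t, of u] by simp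
  then have ineq: "q * x powr (q-1) * (D u (gam * x) / (4 * x powr rho)) \<le> q * x powr (q-1) * mu u (x powr rho)"
    using q x by (intro mult_left_mono) auto
  have xs: "x powr (q-1) / x powr rho = x powr s"
    proof -
      have "x powr (q-1) / x powr rho = x powr (q - 1 - rho)" by (simp add: powr_diff)
      moreover have "q - 1 - rho = s" by (simp add: s_def)
      ultimately show ?thesis by simp
    qed
  have eq: "q * x powr (q-1) * (D u (gam * x) / (4 * x powr rho)) = q / 4 * (x powr s * D u (gam * x))"
    unfolding xs[symmetric] by (simp add: field_simps)
  show ?thesis using ineq eq by linarith
qed

lemma Nq_upper: "Nq u \<le> ennreal (2 * q * gam powr (s+1)) * K u"
proof -
  have "Nq u \<le> (\<integral>\<^sup>+x. ennreal (2*q) * (indicator {0<..} x * ennreal (x powr s * D u (x / gam))) \<partial>lborel)"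
    unfolding Nq_def
  proof (intro nn_integral_mono)
    fix x
    show "indicator {0<..} x * ennreal (q * x powr (q-1) * mu u (x powr rho))
        \<le> ennreal (2*q) * (indicator {0<..} x * ennreal (x powr s * D u (x / gam)))"
    proof (cases "x > 0")
      case True
      then have "ennreal (q * x powr (q-1) * mu u (x powr rho)) \<le> ennreal (2 * q * (x powr s * D u (x / gam)))"
        using pt_upper by (intro ennreal_leI) auto
      then show ?thesis using True q by (simp add: ennreal_mult')
    qed simp
  qed
  also have "\<dots> = ennreal (2*q) * (\<integral>\<^sup>+x. indicator {0<..} x * ennreal (x powr s * D u (x / gam)) \<partial>lborel)"
    by (rule nn_integral_cmult) measurable
  also have "(\<integral>\<^sup>+x. indicator {0<..} x * ennreal (x powr s * D u (x / gam)) \<partial>lborel)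
     = ennreal (gam powr (s+1)) * (\<integral>\<^sup>+x. indicator {0<..} (gam*x) * ennreal (x powr s * D u (gam * x / gam)) \<partial>lborel)"
    using gam_gt1 by (intro scale_nn[where f="\<lambda>x. D u (x / gam)"]) auto
  also have "(\<lambda>x. indicator {0<..} (gam*x) * ennreal (x powr s * D u (gam * x / gam))) = (\<lambda>x. indicator {0<..} x * ennreal (x powr s * D u x))"
    using gam_gt1 by (auto simp: indicator_def zero_less_mult_iff)
  finally show ?thesis using q gam_gt1 by (simp add: K_def mult.assoc[symmetric] ennreal_mult[symmetric])
qed

lemma Nq_lower: "ennreal (q / 4 * gam powr (-(s+1))) * K u \<le> Nq u"
proof -
  have "K u = ennreal (gam powr (s+1)) * (\<integral>\<^sup>+x. indicator {0<..} (gam*x) * ennreal (x powr s * D u (gam * x)) \<partial>lborel)"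
    unfolding K_def using gam_gt1 by (intro scale_nn) auto
  also have "(\<lambda>x. indicator {0<..} (gam*x) * ennreal (x powr s * D u (gam * x))) = (\<lambda>x. indicator {0<..} x * ennreal (x powr s * D u (gam * x)))"
    using gam_gt1 by (auto simp: indicator_def zero_less_mult_iff)
  finally have K: "K u = ennreal (gam powr (s+1)) * (\<integral>\<^sup>+x. indicator {0<..} x * ennreal (x powr s * D u (gam * x)) \<partial>lborel)" .
  have "ennreal (q / 4 * gam powr (-(s+1))) * K u = ennreal (q/4) * (\<integral>\<^sup>+x. indicator {0<..} x * ennreal (x powr s * D u (gam * x)) \<partial>lborel)"
  proof -
    have "gam powr (-(s+1)) * gam powr (s+1) = gam powr (-(s+1) + (s+1))" by (rule powr_add[symmetric])
    then have g: "gam powr (-(s+1)) * gam powr (s+1) = 1" using gam_gt1 by simp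
    have "ennreal (q / 4 * gam powr (-(s+1))) * ennreal (gam powr (s+1)) = ennreal (q/4 * (gam powr (-(s+1)) * gam powr (s+1)))"
      using q by (simp add: ennreal_mult[symmetric] mult.assoc)
    also have "\<dots> = ennreal (q/4)" using g by simp
    finally show ?thesis unfolding K by (simp add: mult.assoc[symmetric])
  qed
  also have "\<dots> = (\<integral>\<^sup>+x. ennreal (q/4) * (indicator {0<..} x * ennreal (x powr s * D u (gam * x))) \<partial>lborel)"
    by (rule nn_integral_cmult[symmetric]) measurable
  also have "\<dots> \<le> Nq u"
    unfolding Nq_def
  proof (intro nn_integral_mono)
    fix x
    show "ennreal (q/4) * (indicator {0<..} x * ennreal (x powr s * D u (gam * x)))
       \<le> indicator {0<..} x * ennreal (q * x powr (q-1) * mu u (x powr rho))"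
    proof (cases "x > 0")
      case True
      then have le: "ennreal (q / 4 * (x powr s * D u (gam * x))) \<le> ennreal (q * x powr (q-1) * mu u (x powr rho))"
        using pt_lower by (intro ennreal_leI) auto
      have "ennreal (q/4) * ennreal (x powr s * D u (gam*x)) = ennreal (q/4 * (x powr s * D u (gam*x)))"
        by (rule ennreal_mult'[symmetric]) (use q in simp)
      then show ?thesis using True le by simp
    qed simp
  qed
  finally show ?thesis .
qed

end
end

context qr_setting begin

definition "IH u = (\<integral>\<^sup>+x. indicator {0<..<1} x * ennreal (x powr s * H u x) \<partial>lborel)"
definition "IG u = (\<integral>\<^sup>+x. indicator {1..} x * ennreal (x powr s * G u x) \<partial>lborel)"
definition "LL = (\<integral>\<^sup>+x. indicator {1..<gam} x * ennreal (x powr s) \<partial>lborel)"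
definition "cc = gam powr (-(s+1))"

lemma cc_pos: "cc > 0" using gam_gt1 by (simp add: cc_def)
lemma cc_mult: "cc * gam powr (s+1) = 1"
proof -
  have "gam powr (-(s+1)) * gam powr (s+1) = gam powr (-(s+1) + (s+1))" by (rule powr_add[symmetric])
  then show ?thesis using gam_gt1 by (simp add: cc_def)
qed

lemma cc_le1: "q \<ge> rho \<Longrightarrow> cc \<le> 1"
  unfolding cc_def using gam_gt1 powr_mono[of "rho - q" 0 gam] by (simp add: s_def)
lemma cc_ge1: "q \<le> rho \<Longrightarrow> cc \<ge> 1"
  unfolding cc_def using gam_gt1 powr_mono[of 0 "rho - q" gam] by (simp add: s_def)

lemma LL_fin: "LL < \<infinity>"
proof -
  have "LL \<le> (\<integral>\<^sup>+x. ennreal (gam powr \<bar>s\<bar>) * indicator {1..gam} x \<partial>lborel)"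
    unfolding LL_def
  proof (intro nn_integral_mono)
    fix x
    show "indicator {1..<gam} x * ennreal (x powr s) \<le> ennreal (gam powr \<bar>s\<bar>) * indicator {1..gam} x"
    proof (cases "x \<in> {1..<gam}")
      case True
      then have "x powr s \<le> x powr \<bar>s\<bar>" by (intro powr_mono) auto
      also have "\<dots> \<le> gam powr \<bar>s\<bar>" using True by (intro powr_mono2) auto
      finally show ?thesis using True by (simp add: ennreal_leI)
    qed (auto simp: indicator_def)
  qed
  also have "\<dots> = ennreal (gam powr \<bar>s\<bar>) * emeasure lborel {1..gam}"
    by (rule nn_integral_cmult_indicator) simp
  also have "\<dots> < \<infinity>" using gam_gt1 by (simp add: ennreal_mult_less_top)
  finally show ?thesis .
qed

context
  fixes u :: "'a \<Rightarrow> real" assumes u: "\<forall>x\<in>X. u x \<ge> 0"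
begin

lemma IH_fin: "IH u < \<infinity>"
proof -
  have hi: "((\<lambda>x. nu X * x powr (q-1)) has_integral (nu X * (1 powr (q-1+1) / (q-1+1)))) {0..1}"
    by (intro has_integral_mult_right has_integral_powr_from_0) (use q in auto)
  have "IH u \<le> (\<integral>\<^sup>+x. ennreal (nu X * x powr (q-1)) * indicator {0..1} x \<partial>lborel)"
    unfolding IH_def
  proof (intro nn_integral_mono)
    fix x
    show "indicator {0<..<1} x * ennreal (x powr s * H u x) \<le> ennreal (nu X * x powr (q-1)) * indicator {0..1} x"
    proof (cases "x \<in> {0<..<1}")
      case True
      have "x powr s * H u x \<le> x powr s * (nu X * x powr rho)"
        using True H_small[OF u] by (intro mult_left_mono) auto
      also have "\<dots> = nu X * (x powr s * x powr rho)" by simp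
      also have "x powr s * x powr rho = x powr (q-1)" by (simp add: powr_add[symmetric] s_def)
      finally show ?thesis using True by (simp add: ennreal_leI)
    qed (auto simp: indicator_def)
  qed
  also have "\<dots> = ennreal (nu X * (1 powr (q-1+1) / (q-1+1)))"
    by (rule nn_integral_has_integral_lebesgue'[OF _ hi]) (use nu_nonneg in auto)
  also have "\<dots> < \<infinity>" by simp
  finally show ?thesis .
qed

lemma IG_fin: "IG u < \<infinity>"
proof -
  obtain L0 where L0: "L0 > 0" "\<And>t. t \<ge> L0 \<Longrightarrow> Psi u t = 0" using Psi_large[OF u] by blast
  define Lam where "Lam = max 1 (L0 powr (1/rho))"
  have Lam1: "Lam \<ge> 1" by (simp add: Lam_def)
  have G0: "G u x = 0" if "x \<ge> Lam" for x
  proof -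
    have "L0 = (L0 powr (1/rho)) powr rho" using L0 rho by (simp add: powr_powr)
    also have "\<dots> \<le> x powr rho" using that rho L0 by (intro powr_mono2) (auto simp: Lam_def)
    finally show ?thesis by (simp add: G_def L0)
  qed
  have "IG u \<le> (\<integral>\<^sup>+x. ennreal (Lam powr \<bar>s\<bar> * M u X) * indicator {1..Lam} x \<partial>lborel)"
    unfolding IG_def
  proof (intro nn_integral_mono)
    fix x
    show "indicator {1..} x * ennreal (x powr s * G u x) \<le> ennreal (Lam powr \<bar>s\<bar> * M u X) * indicator {1..Lam} x"
    proof (cases "x \<in> {1..Lam}")
      case True
      have "x powr s \<le> x powr \<bar>s\<bar>" using True by (intro powr_mono) auto
      also have "\<dots> \<le> Lam powr \<bar>s\<bar>" using True by (intro powr_mono2) auto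
      finally have "x powr s * G u x \<le> Lam powr \<bar>s\<bar> * M u X"
        using True G_le[OF u] G_nonneg[OF u] by (intro mult_mono) auto
      then show ?thesis using True by (simp add: ennreal_leI)
    next
      case False
      then have "x < 1 \<or> x > Lam" by auto
      then show ?thesis using G0 by (auto simp: indicator_def)
    qed
  qed
  also have "\<dots> = ennreal (Lam powr \<bar>s\<bar> * M u X) * emeasure lborel {1..Lam}"
    by (rule nn_integral_cmult_indicator) simp
  also have "\<dots> < \<infinity>" using Lam1 by (simp add: ennreal_mult_less_top)
  finally show ?thesis .
qed

end
end

context qr_setting begin

context
  fixes u :: "'a \<Rightarrow> real" assumes u: "\<forall>x\<in>X. u x \<ge> 0"
begin

lemma K_formula:
  "K u < \<infinity> \<and> enn2real (K u) = (cc - 1) * enn2real (IH u) + (1 - cc) * enn2real (IG u) + cc * M u X * enn2real LL"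
proof -
  define K1 where "K1 = (\<integral>\<^sup>+x. indicator {0<..<1} x * ennreal (x powr s * D u x) \<partial>lborel)"
  define K2 where "K2 = (\<integral>\<^sup>+x. indicator {1..} x * ennreal (x powr s * D u x) \<partial>lborel)"
  define Z where "Z = (\<integral>\<^sup>+x. indicator {0<..<1} x * ennreal (x powr s * H u (gam * x)) \<partial>lborel)"
  define Y where "Y = (\<integral>\<^sup>+x. indicator {1..} x * ennreal (x powr s * G u (gam * x)) \<partial>lborel)"
  define JH where "JH = (\<integral>\<^sup>+x. indicator {1..<gam} x * ennreal (x powr s * H u x) \<partial>lborel)"
  define JG where "JG = (\<integral>\<^sup>+x. indicator {1..<gam} x * ennreal (x powr s * G u x) \<partial>lborel)"
  define IGg where "IGg = (\<integral>\<^sup>+x. indicator {gam..} x * ennreal (x powr s * G u x) \<partial>lborel)"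
  have g1: "gam > 1" by (rule gam_gt1)
  have a: "K u = K1 + K2"
  proof -
    have "K u = (\<integral>\<^sup>+x. indicator {0<..<1} x * ennreal (x powr s * D u x) + indicator {1..} x * ennreal (x powr s * D u x) \<partial>lborel)"
      unfolding K_def by (intro nn_integral_cong) (auto simp: indicator_def)
    also have "\<dots> = K1 + K2" unfolding K1_def K2_def by (rule nn_integral_add) measurable
    finally show ?thesis .
  qed
  have b: "K1 + IH u = Z"
  proof -
    have "K1 + IH u = (\<integral>\<^sup>+x. indicator {0<..<1} x * ennreal (x powr s * D u x) + indicator {0<..<1} x * ennreal (x powr s * H u x) \<partial>lborel)"
      unfolding K1_def IH_def by (rule nn_integral_add[symmetric]) measurable
    also have "\<dots> = Z" unfolding Z_def
    proof (intro nn_integral_cong)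
      fix x
      show "indicator {0<..<1} x * ennreal (x powr s * D u x) + indicator {0<..<1} x * ennreal (x powr s * H u x)
          = indicator {0<..<1} x * ennreal (x powr s * H u (gam * x))"
      proof (cases "x \<in> {0<..<1}")
        case True
        have "0 \<le> x powr s * D u x" "0 \<le> x powr s * H u x" using True D_nonneg[OF u] H_nonneg[OF u] by auto
        then have "ennreal (x powr s * D u x) + ennreal (x powr s * H u x) = ennreal (x powr s * D u x + x powr s * H u x)"
          by simp
        also have "x powr s * D u x + x powr s * H u x = x powr s * H u (gam * x)"
          using H_D[OF u, of x] by (simp add: algebra_simps)
        finally show ?thesis using True by simp
      qed simp
    qed
    finally show ?thesis .
  qed
  have c1: "(\<integral>\<^sup>+x. indicator {0<..<gam} x * ennreal (x powr s * H u x) \<partial>lborel) = ennreal (gam powr (s+1)) * Z"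
  proof -
    have "(\<integral>\<^sup>+x. indicator {0<..<gam} x * ennreal (x powr s * H u x) \<partial>lborel)
       = ennreal (gam powr (s+1)) * (\<integral>\<^sup>+x. indicator {0<..<gam} (gam*x) * ennreal (x powr s * H u (gam*x)) \<partial>lborel)"
      using g1 by (intro scale_nn) auto
    also have "(\<lambda>x. indicator {0<..<gam} (gam*x) * ennreal (x powr s * H u (gam*x))) = (\<lambda>x. indicator {0<..<1} x * ennreal (x powr s * H u (gam*x)))"
      using g1 by (auto simp: indicator_def zero_less_mult_iff)
    finally show ?thesis unfolding Z_def .
  qed
  have c2: "(\<integral>\<^sup>+x. indicator {0<..<gam} x * ennreal (x powr s * H u x) \<partial>lborel) = IH u + JH"
  proof -
    have "(\<integral>\<^sup>+x. indicator {0<..<gam} x * ennreal (x powr s * H u x) \<partial>lborel)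
       = (\<integral>\<^sup>+x. indicator {0<..<1} x * ennreal (x powr s * H u x) + indicator {1..<gam} x * ennreal (x powr s * H u x) \<partial>lborel)"
      using g1 by (intro nn_integral_cong) (auto simp: indicator_def)
    also have "\<dots> = IH u + JH" unfolding IH_def JH_def by (rule nn_integral_add) measurable
    finally show ?thesis .
  qed
  have d: "K2 + Y = IG u"
  proof -
    have "K2 + Y = (\<integral>\<^sup>+x. indicator {1..} x * ennreal (x powr s * D u x) + indicator {1..} x * ennreal (x powr s * G u (gam * x)) \<partial>lborel)"
      unfolding K2_def Y_def by (rule nn_integral_add[symmetric]) measurable
    also have "\<dots> = IG u" unfolding IG_def
    proof (intro nn_integral_cong)
      fix x
      show "indicator {1..} x * ennreal (x powr s * D u x) + indicator {1..} x * ennreal (x powr s * G u (gam * x))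
          = indicator {1..} x * ennreal (x powr s * G u x)"
      proof (cases "x \<in> {1..}")
        case True
        have "0 \<le> x powr s * D u x" "0 \<le> x powr s * G u (gam * x)" using True D_nonneg[OF u] G_nonneg[OF u] by auto
        then have "ennreal (x powr s * D u x) + ennreal (x powr s * G u (gam * x)) = ennreal (x powr s * D u x + x powr s * G u (gam * x))"
          by simp
        also have "x powr s * D u x + x powr s * G u (gam * x) = x powr s * G u x"
          by (simp add: D_def algebra_simps)
        finally show ?thesis using True by simp
      qed simp
    qed
    finally show ?thesis .
  qed
  have e1: "IGg = ennreal (gam powr (s+1)) * Y"
  proof -
    have "IGg = ennreal (gam powr (s+1)) * (\<integral>\<^sup>+x. indicator {gam..} (gam*x) * ennreal (x powr s * G u (gam*x)) \<partial>lborel)"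
      unfolding IGg_def using g1 by (intro scale_nn) auto
    also have "(\<lambda>x. indicator {gam..} (gam*x) * ennreal (x powr s * G u (gam*x))) = (\<lambda>x. indicator {1..} x * ennreal (x powr s * G u (gam*x)))"
      using g1 by (auto simp: indicator_def)
    finally show ?thesis unfolding Y_def .
  qed
  have e2: "IG u = JG + IGg"
  proof -
    have "IG u = (\<integral>\<^sup>+x. indicator {1..<gam} x * ennreal (x powr s * G u x) + indicator {gam..} x * ennreal (x powr s * G u x) \<partial>lborel)"
      unfolding IG_def using g1 by (intro nn_integral_cong) (auto simp: indicator_def)
    also have "\<dots> = JG + IGg" unfolding JG_def IGg_def by (rule nn_integral_add) measurable
    finally show ?thesis .
  qed
  have f: "JH + JG = ennreal (M u X) * LL"
  proof -
    have "JH + JG = (\<integral>\<^sup>+x. indicator {1..<gam} x * ennreal (x powr s * H u x) + indicator {1..<gam} x * ennreal (x powr s * G u x) \<partial>lborel)"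
      unfolding JH_def JG_def by (rule nn_integral_add[symmetric]) measurable
    also have "\<dots> = (\<integral>\<^sup>+x. ennreal (M u X) * (indicator {1..<gam} x * ennreal (x powr s)) \<partial>lborel)"
    proof (intro nn_integral_cong)
      fix x
      show "indicator {1..<gam} x * ennreal (x powr s * H u x) + indicator {1..<gam} x * ennreal (x powr s * G u x)
          = ennreal (M u X) * (indicator {1..<gam} x * ennreal (x powr s))"
      proof (cases "x \<in> {1..<gam}")
        case True
        have "0 \<le> x powr s * H u x" "0 \<le> x powr s * G u x" using True H_nonneg[OF u] G_nonneg[OF u] by auto
        then have "ennreal (x powr s * H u x) + ennreal (x powr s * G u x) = ennreal (x powr s * H u x + x powr s * G u x)"
          by simp
        also have "x powr s * H u x + x powr s * G u x = M u X * x powr s"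
          by (simp add: H_def algebra_simps)
        also have "ennreal (M u X * x powr s) = ennreal (M u X) * ennreal (x powr s)"
          using M_nonneg[OF u] by (simp add: ennreal_mult)
        finally show ?thesis using True by simp
      qed simp
    qed
    also have "\<dots> = ennreal (M u X) * LL" unfolding LL_def by (rule nn_integral_cmult) measurable
    finally show ?thesis .
  qed
  have fIH: "IH u < \<infinity>" by (rule IH_fin[OF u])
  have fIG: "IG u < \<infinity>" by (rule IG_fin[OF u])
  have fLL: "LL < \<infinity>" by (rule LL_fin)
  have fJG: "JG < \<infinity>" and fIGg: "IGg < \<infinity>" using fIG unfolding e2 by (auto simp: ennreal_add_less_top)
  have "JH + JG < \<infinity>" using fLL unfolding f by (simp add: ennreal_mult_less_top)
  then have fJH: "JH < \<infinity>" by (simp add: ennreal_add_less_top)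
  have gp: "gam powr (s+1) > 0" using g1 by simp
  have "ennreal (gam powr (s+1)) * Z = IH u + JH" using c1 c2 by simp
  then have "ennreal (gam powr (s+1)) * Z < \<infinity>" using fIH fJH by (simp add: ennreal_add_less_top)
  then have fZ: "Z < \<infinity>" using gp by (auto simp: ennreal_mult_less_top)
  have fK2: "K2 < \<infinity>" and fY: "Y < \<infinity>" using fIG unfolding d[symmetric] by (auto simp: ennreal_add_less_top)
  have fK1: "K1 < \<infinity>" using fZ unfolding b[symmetric] by (auto simp: ennreal_add_less_top)
  have fK: "K u < \<infinity>" using a fK1 fK2 by (simp add: ennreal_add_less_top)
  obtain ih where ih: "IH u = ennreal ih" "ih \<ge> 0" using fIH by (auto simp: less_top_ennreal)
  obtain ig where ig: "IG u = ennreal ig" "ig \<ge> 0" using fIG by (auto simp: less_top_ennreal)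
  obtain l where l: "LL = ennreal l" "l \<ge> 0" using fLL by (auto simp: less_top_ennreal)
  obtain jg where jg: "JG = ennreal jg" "jg \<ge> 0" using fJG by (auto simp: less_top_ennreal)
  obtain jh where jh: "JH = ennreal jh" "jh \<ge> 0" using fJH by (auto simp: less_top_ennreal)
  obtain igg where igg: "IGg = ennreal igg" "igg \<ge> 0" using fIGg by (auto simp: less_top_ennreal)
  obtain z where z: "Z = ennreal z" "z \<ge> 0" using fZ by (auto simp: less_top_ennreal)
  obtain y where y: "Y = ennreal y" "y \<ge> 0" using fY by (auto simp: less_top_ennreal)
  obtain k1 where k1: "K1 = ennreal k1" "k1 \<ge> 0" using fK1 by (auto simp: less_top_ennreal)
  obtain k2 where k2: "K2 = ennreal k2" "k2 \<ge> 0" using fK2 by (auto simp: less_top_ennreal)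
  have rb: "k1 + ih = z" using b k1 ih z by (simp flip: ennreal_plus)
  have rc: "ih + jh = gam powr (s+1) * z" using c1 c2 ih jh z gp
    by (simp flip: ennreal_plus ennreal_mult)
  have rd: "k2 + y = ig" using d k2 y ig by (simp flip: ennreal_plus)
  have re1: "igg = gam powr (s+1) * y" using e1 igg y gp by (simp flip: ennreal_mult)
  have re2: "ig = jg + igg" using e2 ig jg igg by (simp flip: ennreal_plus)
  have rf: "jh + jg = M u X * l" using f jh jg l M_nonneg[OF u] by (simp flip: ennreal_plus ennreal_mult)
  have zc: "z = cc * (ih + jh)" using rc cc_mult by (metis mult.assoc mult.commute mult_1)
  have yc: "y = cc * igg" using re1 cc_mult by (metis mult.assoc mult.commute mult_1)
  have "enn2real (K u) = k1 + k2" using a k1 k2 by (simp flip: ennreal_plus)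
  also have "\<dots> = (cc - 1) * ih + (1 - cc) * ig + cc * M u X * l"
  proof -
    have h1: "z = cc*ih + cc*jh" using zc by (simp add: distrib_left)
    have h2: "y = cc*igg" by (rule yc)
    have h3: "(cc - 1) * ih = cc*ih - ih" by (simp add: algebra_simps)
    have h4: "(1 - cc) * ig = ig - cc*ig" by (simp add: algebra_simps)
    have h5: "cc*ig = cc*jg + cc*igg" using re2 by (simp add: distrib_left)
    have h6: "cc * M u X * l = cc*jh + cc*jg" using rf by (metis distrib_left mult.assoc)
    show ?thesis using rb rd h1 h2 h3 h4 h5 h6 by linarith
  qed
  finally show ?thesis using fK ih ig l by simp
qed

end
end

context qr_setting begin

definition "Cst = 8 * gam powr (2*(s+1))"

lemma Cst_eq: "2 * q * gam powr (s+1) * (4 / q * gam powr (s+1) * x) = Cst * x"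
proof -
  have "gam powr (2*(s+1)) = gam powr ((s+1)+(s+1))" by simp
  also have "\<dots> = gam powr (s+1) * gam powr (s+1)" by (rule powr_add)
  finally have gg: "gam powr (2*(s+1)) = gam powr (s+1) * gam powr (s+1)" .
  show ?thesis using q unfolding Cst_def gg by (simp add: field_simps)
qed


context
  fixes u :: "'a \<Rightarrow> real" assumes u: "\<forall>x\<in>X. u x \<ge> 0"
begin

lemma Nq_fin: "Nq u < \<infinity>"
proof -
  have "Nq u \<le> ennreal (2 * q * gam powr (s+1)) * K u" by (rule Nq_upper[OF u])
  also have "\<dots> < \<infinity>" using K_formula[OF u] by (simp add: ennreal_mult_less_top)
  finally show ?thesis .
qed

lemma nq_le_k: "enn2real (Nq u) \<le> 2 * q * gam powr (s+1) * enn2real (K u)"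
proof -
  have "enn2real (Nq u) \<le> enn2real (ennreal (2 * q * gam powr (s+1)) * K u)"
    using Nq_upper[OF u] K_formula[OF u] by (intro enn2real_mono) (auto simp: ennreal_mult_less_top)
  also have "\<dots> = 2 * q * gam powr (s+1) * enn2real (K u)" using q by (simp add: enn2real_mult)
  finally show ?thesis .
qed

lemma k_le_nq: "enn2real (K u) \<le> 4 / q * gam powr (s+1) * enn2real (Nq u)"
proof -
  have "enn2real (ennreal (q / 4 * gam powr (-(s+1))) * K u) \<le> enn2real (Nq u)"
    using Nq_lower[OF u] Nq_fin by (intro enn2real_mono) auto
  then have 1: "q / 4 * cc * enn2real (K u) \<le> enn2real (Nq u)"
    using q cc_pos by (simp add: enn2real_mult cc_def)
  have "enn2real (K u) = (4 / q * gam powr (s+1)) * (q / 4 * cc * enn2real (K u))"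
    using q cc_mult by (simp add: field_simps)
  also have "\<dots> \<le> (4 / q * gam powr (s+1)) * enn2real (Nq u)"
    using 1 q by (intro mult_left_mono) auto
  finally show ?thesis .
qed

end

context
  fixes u :: "'a \<Rightarrow> real" assumes u: "\<forall>x\<in>X. u x \<ge> 0"
begin

context
  fixes \<A> assumes AX: "\<A> \<subseteq> Pow X" and dj: "disjoint \<A>"
begin

lemma finA: "finite \<A>" using AX finX by (meson finite_Pow_iff finite_subset)

lemma fam_H: "x \<ge> 0 \<Longrightarrow> H (ur u (\<Union>\<A>)) x \<le> (\<Sum>A\<in>\<A>. H (ur u A) x)"
  unfolding H_def G_def using fam_M[OF AX dj, of u] fam_Psi[OF AX dj, of "x powr rho" u]
  by (simp add: sum_subtractf)

lemma fam_G: "x \<ge> 0 \<Longrightarrow> (\<Sum>A\<in>\<A>. G (ur u A) x) \<le> G (ur u (\<Union>\<A>)) x"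
  unfolding G_def using fam_Psi[OF AX dj, of "x powr rho" u] by simp

lemma fam_IH: "IH (ur u (\<Union>\<A>)) \<le> (\<Sum>A\<in>\<A>. IH (ur u A))"
proof -
  have "IH (ur u (\<Union>\<A>)) \<le> (\<integral>\<^sup>+x. (\<Sum>A\<in>\<A>. indicator {0<..<1} x * ennreal (x powr s * H (ur u A) x)) \<partial>lborel)"
    unfolding IH_def
  proof (intro nn_integral_mono)
    fix x
    show "indicator {0<..<1} x * ennreal (x powr s * H (ur u (\<Union>\<A>)) x) \<le> (\<Sum>A\<in>\<A>. indicator {0<..<1} x * ennreal (x powr s * H (ur u A) x))"
    proof (cases "x \<in> {0<..<1}")
      case True
      have "x powr s * H (ur u (\<Union>\<A>)) x \<le> x powr s * (\<Sum>A\<in>\<A>. H (ur u A) x)"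
        using True fam_H by (intro mult_left_mono) auto
      also have "\<dots> = (\<Sum>A\<in>\<A>. x powr s * H (ur u A) x)" by (simp add: sum_distrib_left)
      finally have "ennreal (x powr s * H (ur u (\<Union>\<A>)) x) \<le> ennreal (\<Sum>A\<in>\<A>. x powr s * H (ur u A) x)"
        by (rule ennreal_leI)
      also have "\<dots> = (\<Sum>A\<in>\<A>. ennreal (x powr s * H (ur u A) x))"
        using True H_nonneg[OF ur_nonneg[OF u]] by (intro sum_ennreal[symmetric]) auto
      finally show ?thesis using True by simp
    qed simp
  qed
  also have "\<dots> = (\<Sum>A\<in>\<A>. IH (ur u A))" unfolding IH_def by (rule nn_integral_sum) measurable
  finally show ?thesis .
qed

lemma fam_IG: "(\<Sum>A\<in>\<A>. IG (ur u A)) \<le> IG (ur u (\<Union>\<A>))"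
proof -
  have "(\<Sum>A\<in>\<A>. IG (ur u A)) = (\<integral>\<^sup>+x. (\<Sum>A\<in>\<A>. indicator {1..} x * ennreal (x powr s * G (ur u A) x)) \<partial>lborel)"
    unfolding IG_def by (rule nn_integral_sum[symmetric]) measurable
  also have "\<dots> \<le> IG (ur u (\<Union>\<A>))"
    unfolding IG_def
  proof (intro nn_integral_mono)
    fix x
    show "(\<Sum>A\<in>\<A>. indicator {1..} x * ennreal (x powr s * G (ur u A) x)) \<le> indicator {1..} x * ennreal (x powr s * G (ur u (\<Union>\<A>)) x)"
    proof (cases "x \<in> {1..}")
      case True
      have "(\<Sum>A\<in>\<A>. ennreal (x powr s * G (ur u A) x)) = ennreal (\<Sum>A\<in>\<A>. x powr s * G (ur u A) x)"
        using True G_nonneg[OF ur_nonneg[OF u]] by (intro sum_ennreal) auto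
      also have "(\<Sum>A\<in>\<A>. x powr s * G (ur u A) x) = x powr s * (\<Sum>A\<in>\<A>. G (ur u A) x)" by (simp add: sum_distrib_left)
      also have "\<dots> \<le> x powr s * G (ur u (\<Union>\<A>)) x"
        using True fam_G by (intro mult_left_mono) auto
      finally have "(\<Sum>A\<in>\<A>. ennreal (x powr s * G (ur u A) x)) \<le> ennreal (x powr s * G (ur u (\<Union>\<A>)) x)"
        by (simp add: ennreal_leI)
      then show ?thesis using True by simp
    qed simp
  qed
  finally show ?thesis .
qed

lemma fam_ihr: "enn2real (IH (ur u (\<Union>\<A>))) \<le> (\<Sum>A\<in>\<A>. enn2real (IH (ur u A)))"
proof -
  have "(\<Sum>A\<in>\<A>. IH (ur u A)) = (\<Sum>A\<in>\<A>. ennreal (enn2real (IH (ur u A))))"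
    using IH_fin[OF ur_nonneg[OF u]] by (intro sum.cong) (auto simp: ennreal_enn2real less_top)
  also have "\<dots> = ennreal (\<Sum>A\<in>\<A>. enn2real (IH (ur u A)))" by (rule sum_ennreal) simp
  finally have eq: "(\<Sum>A\<in>\<A>. IH (ur u A)) = ennreal (\<Sum>A\<in>\<A>. enn2real (IH (ur u A)))" .
  have "enn2real (IH (ur u (\<Union>\<A>))) \<le> enn2real (\<Sum>A\<in>\<A>. IH (ur u A))"
    using fam_IH unfolding eq by (intro enn2real_mono) auto
  also have "\<dots> = (\<Sum>A\<in>\<A>. enn2real (IH (ur u A)))" unfolding eq by (simp add: sum_nonneg)
  finally show ?thesis .
qed

lemma fam_igr: "(\<Sum>A\<in>\<A>. enn2real (IG (ur u A))) \<le> enn2real (IG (ur u (\<Union>\<A>)))"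
proof -
  have "(\<Sum>A\<in>\<A>. enn2real (IG (ur u A))) = enn2real (\<Sum>A\<in>\<A>. IG (ur u A))"
    using IG_fin[OF ur_nonneg[OF u]] by (subst enn2real_sum) auto
  also have "\<dots> \<le> enn2real (IG (ur u (\<Union>\<A>)))"
    using fam_IG IG_fin[OF ur_nonneg[OF u]] by (intro enn2real_mono) auto
  finally show ?thesis .
qed

lemma fam_kr_formula:
  "(\<Sum>A\<in>\<A>. enn2real (K (ur u A))) = (cc - 1) * (\<Sum>A\<in>\<A>. enn2real (IH (ur u A))) + (1 - cc) * (\<Sum>A\<in>\<A>. enn2real (IG (ur u A))) + cc * M (ur u (\<Union>\<A>)) X * enn2real LL"
proof -
  have "(\<Sum>A\<in>\<A>. enn2real (K (ur u A))) = (\<Sum>A\<in>\<A>. (cc - 1) * enn2real (IH (ur u A)) + (1 - cc) * enn2real (IG (ur u A)) + cc * enn2real LL * M (ur u A) X)"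
    using K_formula[OF ur_nonneg[OF u]] by (intro sum.cong) (auto simp: algebra_simps)
  also have "\<dots> = (cc - 1) * (\<Sum>A\<in>\<A>. enn2real (IH (ur u A))) + (1 - cc) * (\<Sum>A\<in>\<A>. enn2real (IG (ur u A))) + cc * enn2real LL * (\<Sum>A\<in>\<A>. M (ur u A) X)"
    by (simp add: sum.distrib sum_distrib_left)
  also have "(\<Sum>A\<in>\<A>. M (ur u A) X) = M (ur u (\<Union>\<A>)) X" by (rule fam_M[OF AX dj])
  finally show ?thesis by (simp add: algebra_simps)
qed

lemma fam_split: "q \<ge> rho \<Longrightarrow> (\<Sum>A\<in>\<A>. enn2real (K (ur u A))) \<le> enn2real (K (ur u (\<Union>\<A>)))"
proof -
  assume qr: "q \<ge> rho"
  have c: "cc \<le> 1" using cc_le1[OF qr] .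
  have "(cc - 1) * (\<Sum>A\<in>\<A>. enn2real (IH (ur u A))) \<le> (cc - 1) * enn2real (IH (ur u (\<Union>\<A>)))"
    using c fam_ihr by (intro mult_left_mono_neg) auto
  moreover have "(1 - cc) * (\<Sum>A\<in>\<A>. enn2real (IG (ur u A))) \<le> (1 - cc) * enn2real (IG (ur u (\<Union>\<A>)))"
    using c fam_igr by (intro mult_left_mono) auto
  ultimately show ?thesis
    unfolding fam_kr_formula using K_formula[OF ur_nonneg[OF u], of "\<Union>\<A>"] by linarith
qed

lemma fam_union: "q \<le> rho \<Longrightarrow> enn2real (K (ur u (\<Union>\<A>))) \<le> (\<Sum>A\<in>\<A>. enn2real (K (ur u A)))"
proof -
  assume qr: "q \<le> rho"
  have c: "cc \<ge> 1" using cc_ge1[OF qr] .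
  have "(cc - 1) * enn2real (IH (ur u (\<Union>\<A>))) \<le> (cc - 1) * (\<Sum>A\<in>\<A>. enn2real (IH (ur u A)))"
    using c fam_ihr by (intro mult_left_mono) auto
  moreover have "(1 - cc) * enn2real (IG (ur u (\<Union>\<A>))) \<le> (1 - cc) * (\<Sum>A\<in>\<A>. enn2real (IG (ur u A)))"
    using c fam_igr by (intro mult_left_mono_neg) auto
  ultimately show ?thesis
    unfolding fam_kr_formula using K_formula[OF ur_nonneg[OF u], of "\<Union>\<A>"] by linarith
qed

lemma main_split: "q \<ge> rho \<Longrightarrow> (\<Sum>A\<in>\<A>. enn2real (Nq (ur u A))) \<le> Cst * enn2real (Nq (ur u (\<Union>\<A>)))"
proof -
  assume qr: "q \<ge> rho"
  have "(\<Sum>A\<in>\<A>. enn2real (Nq (ur u A))) \<le> (\<Sum>A\<in>\<A>. 2 * q * gam powr (s+1) * enn2real (K (ur u A)))"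
    using nq_le_k[OF ur_nonneg[OF u]] by (intro sum_mono) auto
  also have "\<dots> = 2 * q * gam powr (s+1) * (\<Sum>A\<in>\<A>. enn2real (K (ur u A)))" by (simp add: sum_distrib_left)
  also have "\<dots> \<le> 2 * q * gam powr (s+1) * enn2real (K (ur u (\<Union>\<A>)))"
    using fam_split[OF qr] q by (intro mult_left_mono) auto
  also have "\<dots> \<le> 2 * q * gam powr (s+1) * (4 / q * gam powr (s+1) * enn2real (Nq (ur u (\<Union>\<A>))))"
    using k_le_nq[OF ur_nonneg[OF u]] q by (intro mult_left_mono) auto
  also have "\<dots> = Cst * enn2real (Nq (ur u (\<Union>\<A>)))" by (rule Cst_eq)
  finally show ?thesis .
qed

lemma main_union: "q \<le> rho \<Longrightarrow> enn2real (Nq (ur u (\<Union>\<A>))) \<le> Cst * (\<Sum>A\<in>\<A>. enn2real (Nq (ur u A)))"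
proof -
  assume qr: "q \<le> rho"
  have "enn2real (Nq (ur u (\<Union>\<A>))) \<le> 2 * q * gam powr (s+1) * enn2real (K (ur u (\<Union>\<A>)))"
    using nq_le_k[OF ur_nonneg[OF u]] by auto
  also have "\<dots> \<le> 2 * q * gam powr (s+1) * (\<Sum>A\<in>\<A>. enn2real (K (ur u A)))"
    using fam_union[OF qr] q by (intro mult_left_mono) auto
  also have "\<dots> \<le> 2 * q * gam powr (s+1) * (\<Sum>A\<in>\<A>. 4 / q * gam powr (s+1) * enn2real (Nq (ur u A)))"
    using k_le_nq[OF ur_nonneg[OF u]] q by (intro mult_left_mono sum_mono) auto
  also have "\<dots> = (\<Sum>A\<in>\<A>. 2 * q * gam powr (s+1) * (4 / q * gam powr (s+1) * enn2real (Nq (ur u A))))"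
    by (rule sum_distrib_left)
  also have "\<dots> = (\<Sum>A\<in>\<A>. Cst * enn2real (Nq (ur u A)))" by (simp only: Cst_eq)
  also have "\<dots> = Cst * (\<Sum>A\<in>\<A>. enn2real (Nq (ur u A)))" by (rule sum_distrib_left[symmetric])
  finally show ?thesis .
qed

end
end
end


lemma powr_iff:
  fixes a m lam rho :: real
  assumes a: "a > 0" and m: "m \<ge> 0" and lam: "lam > 0" and rho: "rho > 0"
  shows "a powr (- (1/rho)) * m powr (1/rho) \<le> lam \<longleftrightarrow> m \<le> lam powr rho * a"
proof -
  have e1: "(m/a) powr (1/rho) = m powr (1/rho) / a powr (1/rho)" using a m by (auto intro: powr_divide)
  have e2: "a powr (-(1/rho)) = inverse (a powr (1/rho))" by (rule powr_minus)
  have e: "a powr (- (1/rho)) * m powr (1/rho) = (m / a) powr (1/rho)"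
    unfolding e1 e2 by (simp add: divide_inverse mult.commute)
  have "(m / a) powr (1/rho) \<le> lam \<longleftrightarrow> m / a \<le> lam powr rho"
  proof
    assume h: "(m / a) powr (1/rho) \<le> lam"
    have "((m / a) powr (1/rho)) powr rho \<le> lam powr rho"
      using h a m rho by (intro powr_mono2) auto
    moreover have "((m / a) powr (1/rho)) powr rho = m / a"
      using a m rho by (simp add: powr_powr)
    ultimately show "m / a \<le> lam powr rho" by simp
  next
    assume h: "m / a \<le> lam powr rho"
    have "(m / a) powr (1/rho) \<le> (lam powr rho) powr (1/rho)"
      using h a m rho by (intro powr_mono2) auto
    also have "\<dots> = lam" using lam rho by (simp add: powr_powr)
    finally show "(m / a) powr (1/rho) \<le> lam" .
  qed
  also have "\<dots> \<longleftrightarrow> m \<le> lam powr rho * a" using a by (simp add: divide_le_eq)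
  finally show ?thesis using e by simp
qed

context qr_setting begin

definition "uf w (g :: 'a \<Rightarrow> 'b::real_normed_vector) x = w x * norm (g x) powr rho"

lemma uf_nonneg: "pos_weight X w \<Longrightarrow> \<forall>x\<in>X. uf w g x \<ge> 0"
  by (auto simp: uf_def pos_weight_def)

lemma uf_restr: "uf w (restr A g) = ur (uf w g) A"
  using rho by (auto simp: uf_def ur_def restr_def fun_eq_iff)

lemma Linf_iff:
  assumes BX: "B \<subseteq> X" and lam: "lam > 0" and pw: "pos_weight X w"
  shows "Linf_ell X nu w (ereal rho) (restr (X - B) g) \<le> lam \<longleftrightarrow> adm (uf w g) B (lam powr rho)"
proof -
  have fin: "finite {ell_size X nu w (ereal rho) (restr (X - B) g) E | E. E \<subseteq> X \<and> E \<noteq> {}}"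
  proof -
    have "{ell_size X nu w (ereal rho) (restr (X - B) g) E | E. E \<subseteq> X \<and> E \<noteq> {}}
        \<subseteq> (\<lambda>E. ell_size X nu w (ereal rho) (restr (X - B) g) E) ` Pow X" by blast
    then show ?thesis using finX by (meson finite_Pow_iff finite_imageI finite_subset)
  qed
  have ell: "ell_size X nu w (ereal rho) (restr (X - B) g) E = nu E powr (- (1/rho)) * M (uf w g) (E - B) powr (1/rho)"
    if E: "E \<subseteq> X" for E
  proof -
    have "(\<Sum>x\<in>X. w x * norm (restr E (restr (X - B) g) x) powr rho) = (\<Sum>x\<in>X \<inter> (E - B). uf w g x)"
      using finX rho by (simp add: sum.inter_restrict restr_def uf_def) (intro sum.cong, auto)
    then show ?thesis
      using rho by (simp add: ell_size_def Lr_norm_def inv_exp_def M_def)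
  qed
  have "Linf_ell X nu w (ereal rho) (restr (X - B) g) \<le> lam \<longleftrightarrow>
      (\<forall>E. E \<subseteq> X \<and> E \<noteq> {} \<longrightarrow> ell_size X nu w (ereal rho) (restr (X - B) g) E \<le> lam)"
    unfolding Linf_ell_def using fin lam by auto
  also have "\<dots> \<longleftrightarrow> (\<forall>E. E \<subseteq> X \<longrightarrow> M (uf w g) (E - B) \<le> lam powr rho * nu E)"
  proof (intro iffI allI impI)
    fix E assume h: "\<forall>E. E \<subseteq> X \<and> E \<noteq> {} \<longrightarrow> ell_size X nu w (ereal rho) (restr (X - B) g) E \<le> lam"
      and E: "E \<subseteq> X"
    show "M (uf w g) (E - B) \<le> lam powr rho * nu E"
    proof (cases "E = {}")
      case True then show ?thesis by (simp add: nu_empty)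
    next
      case False
      have "nu E powr (- (1/rho)) * M (uf w g) (E - B) powr (1/rho) \<le> lam" using h E False ell by auto
      then show ?thesis
        using powr_iff[OF nu_pos[OF E False] M_nonneg[OF uf_nonneg[OF pw]] lam rho] by auto
    qed
  next
    fix E assume h: "\<forall>E. E \<subseteq> X \<longrightarrow> M (uf w g) (E - B) \<le> lam powr rho * nu E"
      and E: "E \<subseteq> X \<and> E \<noteq> {}"
    have "M (uf w g) (E - B) \<le> lam powr rho * nu E" using h E by auto
    then show "ell_size X nu w (ereal rho) (restr (X - B) g) E \<le> lam"
      using powr_iff[OF nu_pos M_nonneg[OF uf_nonneg[OF pw]] lam rho] E ell by auto
  qed
  finally show ?thesis using BX by (simp add: adm_def mult.commute)
qed

end


context qr_setting begin

lemma SL_eq: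
  assumes pw: "pos_weight X w" and lam: "lam > 0"
  shows "super_level X nu w (ereal rho) g lam = mu (uf w g) (lam powr rho)"
proof -
  have "{nu B' | B'. B' \<subseteq> X \<and> Linf_ell X nu w (ereal rho) (restr (X - B') g) \<le> lam}
      = {nu B | B. adm (uf w g) B (lam powr rho)}"
    using Linf_iff[OF _ lam pw] by (auto simp: adm_def)
  then show ?thesis unfolding super_level_def mu_def by simp
qed

lemma mu_meas: "(\<lambda>x. indicator {0<..} x * (q * x powr (q-1) * mu u (x powr rho))) \<in> borel_measurable borel"
proof -
  define F where "F x = (if x > 0 then mu u (x powr rho) else nu X)" for x
  have "mono (\<lambda>x. - F x)"
  proof (rule monoI)
    fix x y :: real assume xy: "x \<le> y"
    show "- F x \<le> - F y"
    proof (cases "x > 0")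
      case True
      then show ?thesis using xy rho by (simp add: F_def mu_antimono powr_mono2)
    next
      case False
      then show ?thesis using xy by (auto simp: F_def mu_bounds)
    qed
  qed
  then have "(\<lambda>x. - F x) \<in> borel_measurable borel" by (rule borel_measurable_mono)
  then have m: "(\<lambda>x. - (- F x)) \<in> borel_measurable borel" by measurable
  then have mF[measurable]: "F \<in> borel_measurable borel" by simp
  have "(\<lambda>x. indicator {0<..} x * (q * x powr (q-1) * F x)) \<in> borel_measurable borel"
    by measurable
  moreover have "(\<lambda>x. indicator {0<..} x * (q * x powr (q-1) * F x)) = (\<lambda>x. indicator {0<..} x * (q * x powr (q-1) * mu u (x powr rho)))"
    by (auto simp: F_def indicator_def fun_eq_iff)
  ultimately show ?thesis by simp
qed

lemma Lq_eq:
  assumes pw: "pos_weight X w"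
  shows "Lq_ell X nu w q (ereal rho) g powr q = enn2real (Nq (uf w g))"
proof -
  let ?F = "\<lambda>x. indicator {0<..} x *\<^sub>R (q * x powr (q-1) * super_level X nu w (ereal rho) g x)"
  have F: "?F = (\<lambda>x. indicator {0<..} x * (q * x powr (q-1) * mu (uf w g) (x powr rho)))"
    using SL_eq[OF pw] by (auto simp: indicator_def fun_eq_iff)
  have nn: "0 \<le> ?F x" for x
    using fun_cong[OF F, of x] mu_bounds[of "x powr rho" "uf w g"] q by (auto simp: indicator_def)
  have "(LINT x:{0<..}|lborel. q * x powr (q-1) * super_level X nu w (ereal rho) g x) = integral\<^sup>L lborel ?F"
    by (simp add: set_lebesgue_integral_def)
  also have "\<dots> = enn2real (\<integral>\<^sup>+x. ennreal (?F x) \<partial>lborel)"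
  proof (rule integral_eq_nn_integral)
    show "?F \<in> borel_measurable lborel" unfolding F using mu_meas by simp
    show "AE x in lborel. 0 \<le> ?F x" using nn by simp
  qed
  also have "(\<integral>\<^sup>+x. ennreal (?F x) \<partial>lborel) = Nq (uf w g)"
    unfolding Nq_def by (intro nn_integral_cong) (auto simp: indicator_def SL_eq[OF pw])
  finally have e: "(LINT x:{0<..}|lborel. q * x powr (q-1) * super_level X nu w (ereal rho) g x) = enn2real (Nq (uf w g))" .
  show ?thesis unfolding Lq_ell_def e using q by (simp add: powr_powr)
qed

lemma Cst_explicit: "Cst = 8 * (2 powr (1/rho)) powr (2*(q-rho))"
proof -
  have e: "2*(s+1) = 2*(q-rho)" by (simp add: s_def)
  show ?thesis unfolding Cst_def gam_def e by (rule refl)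
qed

lemma finite_case:
  assumes pw: "pos_weight X w" and AX: "\<A> \<subseteq> Pow X" and dj: "disjoint \<A>"
  shows "(rho \<le> q \<longrightarrow> (\<Sum>A\<in>\<A>. Lq_ell X nu w q (ereal rho) (restr A f) powr q) \<le> Cst * Lq_ell X nu w q (ereal rho) (restr (\<Union>\<A>) f) powr q)
       \<and> (q \<le> rho \<longrightarrow> Lq_ell X nu w q (ereal rho) (restr (\<Union>\<A>) f) powr q \<le> Cst * (\<Sum>A\<in>\<A>. Lq_ell X nu w q (ereal rho) (restr A f) powr q))"
proof -
  have u: "\<forall>x\<in>X. uf w f x \<ge> 0" by (rule uf_nonneg[OF pw])
  have L: "Lq_ell X nu w q (ereal rho) (restr A f) powr q = enn2real (Nq (ur (uf w f) A))" for A
    by (simp only: Lq_eq[OF pw] uf_restr)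
  show ?thesis unfolding L using main_split[OF u AX dj] main_union[OF u AX dj] by auto
qed

end

lemma finite_case_global:
  fixes q rho :: real and X :: "'a set" and f :: "'a \<Rightarrow> 'b::real_normed_vector"
  assumes q: "0 < q" and rho: "0 < rho" and fin: "finite X" and om: "outer_measure X nu"
    and pw: "pos_weight X w" and AX: "\<A> \<subseteq> Pow X" and dj: "disjoint \<A>"
  shows "(rho \<le> q \<longrightarrow> (\<Sum>A\<in>\<A>. Lq_ell X nu w q (ereal rho) (restr A f) powr q) \<le> 8 * (2 powr (1/rho)) powr (2*(q-rho)) * Lq_ell X nu w q (ereal rho) (restr (\<Union>\<A>) f) powr q)
       \<and> (q \<le> rho \<longrightarrow> Lq_ell X nu w q (ereal rho) (restr (\<Union>\<A>) f) powr q \<le> 8 * (2 powr (1/rho)) powr (2*(q-rho)) * (\<Sum>A\<in>\<A>. Lq_ell X nu w q (ereal rho) (restr A f) powr q))"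
proof -
  interpret qr_setting X nu q rho
    by (intro qr_setting.intro om_setting.intro qr_setting_axioms.intro) (use assms in auto)
  show ?thesis using finite_case[OF pw AX dj, of f] Cst_explicit by simp
qed



context om_setting begin

lemma ell_inf:
  assumes "E \<subseteq> X" "E \<noteq> {}"
  shows "ell_size X nu w \<infinity> h E = Max ((\<lambda>x. norm (restr E h x)) ` X \<union> {0})"
  using nu_pos[OF assms] by (simp add: ell_size_def inv_exp_def Lr_norm_def)

lemma Linf_inf_iff:
  assumes BX: "B \<subseteq> X" and lam: "lam \<ge> 0"
  shows "Linf_ell X nu w \<infinity> (restr (X - B) g) \<le> lam \<longleftrightarrow> (\<forall>x\<in>X - B. norm (g x) \<le> lam)"
proof -
  have fin: "finite {ell_size X nu w \<infinity> (restr (X - B) g) E | E. E \<subseteq> X \<and> E \<noteq> {}}"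
  proof -
    have "{ell_size X nu w \<infinity> (restr (X - B) g) E | E. E \<subseteq> X \<and> E \<noteq> {}}
        \<subseteq> (\<lambda>E. ell_size X nu w \<infinity> (restr (X - B) g) E) ` Pow X" by blast
    then show ?thesis using finX by (meson finite_Pow_iff finite_imageI finite_subset)
  qed
  have "Linf_ell X nu w \<infinity> (restr (X - B) g) \<le> lam \<longleftrightarrow>
      (\<forall>E. E \<subseteq> X \<and> E \<noteq> {} \<longrightarrow> ell_size X nu w \<infinity> (restr (X - B) g) E \<le> lam)"
    unfolding Linf_ell_def using fin lam by auto
  also have "\<dots> \<longleftrightarrow> (\<forall>E. E \<subseteq> X \<and> E \<noteq> {} \<longrightarrow> (\<forall>x\<in>X. norm (restr E (restr (X - B) g) x) \<le> lam))"
    using finX lam by (auto simp: ell_inf)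
  also have "\<dots> \<longleftrightarrow> (\<forall>x\<in>X - B. norm (g x) \<le> lam)"
  proof
    assume h: "\<forall>E. E \<subseteq> X \<and> E \<noteq> {} \<longrightarrow> (\<forall>x\<in>X. norm (restr E (restr (X - B) g) x) \<le> lam)"
    show "\<forall>x\<in>X - B. norm (g x) \<le> lam"
    proof
      fix x assume x: "x \<in> X - B"
      have "norm (restr {x} (restr (X - B) g) x) \<le> lam" using h x by auto
      then show "norm (g x) \<le> lam" using x by (simp add: restr_def)
    qed
  next
    assume h: "\<forall>x\<in>X - B. norm (g x) \<le> lam"
    then show "\<forall>E. E \<subseteq> X \<and> E \<noteq> {} \<longrightarrow> (\<forall>x\<in>X. norm (restr E (restr (X - B) g) x) \<le> lam)"
      using lam by (auto simp: restr_def)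
  qed
  finally show ?thesis .
qed

lemma SL_inf:
  assumes lam: "lam \<ge> 0"
  shows "super_level X nu w \<infinity> g lam = nu {x\<in>X. lam < norm (g x)}"
  unfolding super_level_def
proof (rule cInf_eq_minimum)
  show "nu {x\<in>X. lam < norm (g x)} \<in> {nu B' | B'. B' \<subseteq> X \<and> Linf_ell X nu w \<infinity> (restr (X - B') g) \<le> lam}"
    using Linf_inf_iff[of "{x\<in>X. lam < norm (g x)}" lam w g] lam by force
next
  fix y assume "y \<in> {nu B' | B'. B' \<subseteq> X \<and> Linf_ell X nu w \<infinity> (restr (X - B') g) \<le> lam}"
  then obtain B' where B': "y = nu B'" "B' \<subseteq> X" "Linf_ell X nu w \<infinity> (restr (X - B') g) \<le> lam" by blast
  then have "{x\<in>X. lam < norm (g x)} \<subseteq> B'" using Linf_inf_iff[OF B'(2) lam] by force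
  then show "nu {x\<in>X. lam < norm (g x)} \<le> y" using B' by (simp add: nu_mono)
qed

definition "Ninf q g = (\<integral>\<^sup>+x. indicator {0<..} x * ennreal (q * x powr (q-1) * nu {y\<in>X. x < norm (g y)}) \<partial>lborel)"

lemma lev_meas[measurable]: "(\<lambda>x. nu {y\<in>X. x < norm (g y)}) \<in> borel_measurable borel"
proof -
  have "mono (\<lambda>x. - nu {y\<in>X. x < norm (g y)})"
    by (rule monoI) (auto intro!: nu_mono)
  then have "(\<lambda>x. - nu {y\<in>X. x < norm (g y)}) \<in> borel_measurable borel" by (rule borel_measurable_mono)
  then have "(\<lambda>x. - (- nu {y\<in>X. x < norm (g y)})) \<in> borel_measurable borel" by measurable
  then show ?thesis by simp
qed

lemma Lq_inf_eq:
  assumes q: "q > 0"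
  shows "Lq_ell X nu w q \<infinity> g powr q = enn2real (Ninf q g)"
proof -
  let ?F = "\<lambda>x. indicator {0<..} x *\<^sub>R (q * x powr (q-1) * super_level X nu w \<infinity> g x)"
  have F: "?F = (\<lambda>x. indicator {0<..} x * (q * x powr (q-1) * nu {y\<in>X. x < norm (g y)}))"
    by (auto simp: indicator_def fun_eq_iff SL_inf)
  have nn: "0 \<le> ?F x" for x
    using fun_cong[OF F, of x] nu_nonneg[of "{y\<in>X. x < norm (g y)}"] q by (auto simp: indicator_def)
  have "(LINT x:{0<..}|lborel. q * x powr (q-1) * super_level X nu w \<infinity> g x) = integral\<^sup>L lborel ?F"
    by (simp add: set_lebesgue_integral_def)
  also have "\<dots> = enn2real (\<integral>\<^sup>+x. ennreal (?F x) \<partial>lborel)"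
  proof (rule integral_eq_nn_integral)
    show "?F \<in> borel_measurable lborel" unfolding F by measurable
    show "AE x in lborel. 0 \<le> ?F x" using nn by simp
  qed
  also have "(\<integral>\<^sup>+x. ennreal (?F x) \<partial>lborel) = Ninf q g"
    unfolding Ninf_def by (intro nn_integral_cong) (auto simp: indicator_def SL_inf)
  finally have e: "(LINT x:{0<..}|lborel. q * x powr (q-1) * super_level X nu w \<infinity> g x) = enn2real (Ninf q g)" .
  show ?thesis unfolding Lq_ell_def e using q by (simp add: powr_powr)
qed

lemma Ninf_fin:
  assumes q: "q > 0"
  shows "Ninf q g < \<infinity>"
proof -
  define Lam where "Lam = (\<Sum>y\<in>X. norm (g y))"
  have Lam0: "Lam \<ge> 0" by (simp add: Lam_def sum_nonneg)
  have hi: "((\<lambda>x. nu X * (q * x powr (q-1))) has_integral (nu X * (q * (Lam powr (q-1+1) / (q-1+1))))) {0..Lam}"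
    by (intro has_integral_mult_right has_integral_powr_from_0) (use q Lam0 in auto)
  have "Ninf q g \<le> (\<integral>\<^sup>+x. ennreal (nu X * (q * x powr (q-1))) * indicator {0..Lam} x \<partial>lborel)"
    unfolding Ninf_def
  proof (intro nn_integral_mono)
    fix x
    show "indicator {0<..} x * ennreal (q * x powr (q-1) * nu {y\<in>X. x < norm (g y)})
        \<le> ennreal (nu X * (q * x powr (q-1))) * indicator {0..Lam} x"
    proof (cases "x \<in> {0<..Lam}")
      case True
      have "nu {y\<in>X. x < norm (g y)} \<le> nu X" by (rule nu_mono) auto
      then have "q * x powr (q-1) * nu {y\<in>X. x < norm (g y)} \<le> nu X * (q * x powr (q-1))"
        using q True by (simp add: mult.commute mult_left_mono)
      then show ?thesis using True by (simp add: ennreal_leI)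
    next
      case False
      show ?thesis
      proof (cases "x > 0")
        case True
        then have xL: "x > Lam" using False by auto
        have "{y\<in>X. x < norm (g y)} = {}"
        proof (rule ccontr)
          assume "{y\<in>X. x < norm (g y)} \<noteq> {}"
          then obtain y where y: "y \<in> X" "x < norm (g y)" by blast
          have "norm (g y) \<le> Lam" unfolding Lam_def using y finX by (intro member_le_sum) auto
          then show False using y xL by simp
        qed
        then have e0: "nu {y\<in>X. x < norm (g y)} = 0" by (metis nu_empty)
        show ?thesis by (simp add: e0)
      qed simp
    qed
  qed
  also have "\<dots> = ennreal (nu X * (q * (Lam powr (q-1+1) / (q-1+1))))"
    by (rule nn_integral_has_integral_lebesgue'[OF _ hi]) (use nu_nonneg q in auto)
  also have "\<dots> < \<infinity>" by simp
  finally show ?thesis .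
qed

lemma inf_union:
  assumes q: "q > 0" and AX: "\<A> \<subseteq> Pow X"
  shows "enn2real (Ninf q (restr (\<Union>\<A>) f)) \<le> (\<Sum>A\<in>\<A>. enn2real (Ninf q (restr A f)))"
proof -
  have finA: "finite \<A>" using AX finX by (meson finite_Pow_iff finite_subset)
  have "Ninf q (restr (\<Union>\<A>) f) \<le> (\<integral>\<^sup>+x. (\<Sum>A\<in>\<A>. indicator {0<..} x * ennreal (q * x powr (q-1) * nu {y\<in>X. x < norm (restr A f y)})) \<partial>lborel)"
    unfolding Ninf_def
  proof (intro nn_integral_mono)
    fix x
    show "indicator {0<..} x * ennreal (q * x powr (q-1) * nu {y\<in>X. x < norm (restr (\<Union>\<A>) f y)})
        \<le> (\<Sum>A\<in>\<A>. indicator {0<..} x * ennreal (q * x powr (q-1) * nu {y\<in>X. x < norm (restr A f y)}))"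
    proof (cases "x > 0")
      case True
      have eq: "{y\<in>X. x < norm (restr (\<Union>\<A>) f y)} = (\<Union>A\<in>\<A>. {y\<in>X. x < norm (restr A f y)})"
        using True by (auto simp: restr_def split: if_splits)
      have "nu {y\<in>X. x < norm (restr (\<Union>\<A>) f y)} \<le> (\<Sum>A\<in>\<A>. nu {y\<in>X. x < norm (restr A f y)})"
        unfolding eq using finA by (intro nu_UN_le) auto
      then have "q * x powr (q-1) * nu {y\<in>X. x < norm (restr (\<Union>\<A>) f y)} \<le> (\<Sum>A\<in>\<A>. q * x powr (q-1) * nu {y\<in>X. x < norm (restr A f y)})"
        using q True by (simp add: sum_distrib_left[symmetric] mult_left_mono)
      then have "ennreal (q * x powr (q-1) * nu {y\<in>X. x < norm (restr (\<Union>\<A>) f y)}) \<le> ennreal (\<Sum>A\<in>\<A>. q * x powr (q-1) * nu {y\<in>X. x < norm (restr A f y)})"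
        by (rule ennreal_leI)
      also have "\<dots> = (\<Sum>A\<in>\<A>. ennreal (q * x powr (q-1) * nu {y\<in>X. x < norm (restr A f y)}))"
        using q True nu_nonneg by (intro sum_ennreal[symmetric]) auto
      finally show ?thesis using True by simp
    qed simp
  qed
  also have "\<dots> = (\<Sum>A\<in>\<A>. Ninf q (restr A f))" unfolding Ninf_def by (rule nn_integral_sum) measurable
  also have "\<dots> = (\<Sum>A\<in>\<A>. ennreal (enn2real (Ninf q (restr A f))))"
    by (intro sum.cong refl ennreal_enn2real[symmetric]) (use Ninf_fin[OF q] in simp)
  also have "\<dots> = ennreal (\<Sum>A\<in>\<A>. enn2real (Ninf q (restr A f)))" by (rule sum_ennreal) simp
  finally have "Ninf q (restr (\<Union>\<A>) f) \<le> ennreal (\<Sum>A\<in>\<A>. enn2real (Ninf q (restr A f)))" .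
  then have "enn2real (Ninf q (restr (\<Union>\<A>) f)) \<le> enn2real (ennreal (\<Sum>A\<in>\<A>. enn2real (Ninf q (restr A f))))"
    by (intro enn2real_mono) auto
  then show ?thesis by (simp add: sum_nonneg)
qed

lemma inf_case:
  assumes q: "q > 0" and AX: "\<A> \<subseteq> Pow X"
  shows "Lq_ell X nu w q \<infinity> (restr (\<Union>\<A>) f) powr q \<le> 1 * (\<Sum>A\<in>\<A>. Lq_ell X nu w q \<infinity> (restr A f) powr q)"
  using inf_union[OF q AX, of f] by (simp add: Lq_inf_eq[OF q])

end

theorem lemma3p1:
  fixes q :: real and r :: ereal
  assumes "0 < q" and "0 < r"
  shows "\<exists>C::real. \<forall>(X::'a set) \<nu> w (\<A>::'a set set) (f::'a \<Rightarrow> 'b::real_normed_vector).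
    finite X \<and> outer_measure X \<nu> \<and> pos_weight X w \<and> \<A> \<subseteq> Pow X \<and> disjoint \<A> \<longrightarrow>
      (r \<le> ereal q \<longrightarrow>
         (\<Sum>A\<in>\<A>. Lq_ell X \<nu> w q r (restr A f) powr q)
           \<le> C * Lq_ell X \<nu> w q r (restr (\<Union>\<A>) f) powr q) \<and>
      (ereal q \<le> r \<longrightarrow>
         Lq_ell X \<nu> w q r (restr (\<Union>\<A>) f) powr q
           \<le> C * (\<Sum>A\<in>\<A>. Lq_ell X \<nu> w q r (restr A f) powr q))"
proof (cases "r = \<infinity>")
  case True
  show ?thesis
  proof (intro exI[of _ 1] allI impI conjI)
    fix X :: "'a set" and \<nu> w and \<A> :: "'a set set" and f :: "'a \<Rightarrow> 'b"
    assume h: "finite X \<and> outer_measure X \<nu> \<and> pos_weight X w \<and> \<A> \<subseteq> Pow X \<and> disjoint \<A>"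
    interpret om_setting X \<nu> by (intro om_setting.intro) (use h in auto)
    show "r \<le> ereal q \<Longrightarrow> (\<Sum>A\<in>\<A>. Lq_ell X \<nu> w q r (restr A f) powr q) \<le> 1 * Lq_ell X \<nu> w q r (restr (\<Union>\<A>) f) powr q"
      using True by simp
    show "ereal q \<le> r \<Longrightarrow> Lq_ell X \<nu> w q r (restr (\<Union>\<A>) f) powr q \<le> 1 * (\<Sum>A\<in>\<A>. Lq_ell X \<nu> w q r (restr A f) powr q)"
      using inf_case[OF assms(1), of \<A> w f] h True by simp
  qed
next
  case False
  obtain rho where r: "r = ereal rho" using False assms(2) by (cases r) auto
  have rho: "rho > 0" using assms(2) r by simp
  show ?thesis
  proof (intro exI[of _ "8 * (2 powr (1/rho)) powr (2*(q-rho))"] allI impI)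
    fix X :: "'a set" and \<nu> w and \<A> :: "'a set set" and f :: "'a \<Rightarrow> 'b"
    assume h: "finite X \<and> outer_measure X \<nu> \<and> pos_weight X w \<and> \<A> \<subseteq> Pow X \<and> disjoint \<A>"
    then show "(r \<le> ereal q \<longrightarrow>
         (\<Sum>A\<in>\<A>. Lq_ell X \<nu> w q r (restr A f) powr q)
           \<le> 8 * (2 powr (1/rho)) powr (2*(q-rho)) * Lq_ell X \<nu> w q r (restr (\<Union>\<A>) f) powr q) \<and>
      (ereal q \<le> r \<longrightarrow>
         Lq_ell X \<nu> w q r (restr (\<Union>\<A>) f) powr q
           \<le> 8 * (2 powr (1/rho)) powr (2*(q-rho)) * (\<Sum>A\<in>\<A>. Lq_ell X \<nu> w q r (restr A f) powr q))"
      using finite_case_global[OF assms(1) rho, of X \<nu> w \<A> f] r by auto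
  qed
qed


end
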